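(* Let $L\geq 2$ be an integer and $N=L^2$ (so $N\geq 2$), and let $\lambda,\mu\in\mathbb{C}$ be nonzero. For $J\in\mathbb{C}$ consider the polynomial potential $V_J:\mathbb{C}^N\to\mathbb{C}$, $$V_J(q)=\sum_{i\in\Lambda}\Biggl[\frac{\lambda}{4!}q_i^4-\frac{\mu^2}{2}q_i^2+\frac{J}{4}\sum_{j\in\mathcal{N}(i)}(q_i-q_j)^2\Biggr],$$ where $\Lambda$, $\mathcal N(i)$ are as in the context. Let $\mathcal{A}(N,\lambda,\mu^2)$ be the set of pairs $(q,J)\in\mathbb{C}^N\times\mathbb{C}$ such that $\frac{\partial V_J}{\partial q_i}(q)=0$ for all $i=1,\dots,N$ and $\det \mathcal{H}_{V_J}(q)=0$, where $\mathcal{H}_{V_J}(q)=\bigl(\frac{\partial^2 V_J(q)}{\partial q_i\partial q_j}\bigr)_{i,j}$ is the Hessian matrix. Let $$\mathcal{S}(N,\lambda,\mu^2)=\{J\in\mathbb{C}\mid (q,J)\in\mathcal{A}(N,\lambda,\mu^2)\text{ for some } q\in\mathbb{C}^N\}$$ be the set of couplings $J$ for which $V_J$ has at least one singular (degenerate) complex stationary point. Then $\mathcal{S}(N,\lambda,\mu^2)$ is a finite subset of $\mathbb{C}$.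
   Context: $\Lambda$ is the square lattice $\{1,\dots,L\}^2$ (periodic boundary conditions, i.e. the discrete torus $(\mathbb{Z}/L\mathbb{Z})^2$) with its $N=L^2$ sites labelled $1,\dots,N$, and $q=(q_1,\dots,q_N)$ assigns a variable $q_i$ to each site $i$. For $i\in\Lambda$, $\mathcal{N}(i)$ denotes the four nearest-neighbouring sites of $i$ on the periodic square lattice (counted with multiplicity if they coincide). This is the potential energy of the two-dimensional nearest-neighbour $\phi^4$ model with coupling $J$; here $q$ and $J$ are allowed to be complex. *)

theory Defs
  imports "HOL-Analysis.Derivative" "Jordan_Normal_Form.Determinant"
begin

text \<open>Sites of the periodic L x L lattice are labelled 0..<N (N = L^2); site k
  corresponds to the lattice point (k div L, k mod L) of the torus (Z/LZ)^2.\<close>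

definition site :: "nat \<Rightarrow> nat \<Rightarrow> nat \<Rightarrow> nat" where
  "site L a b = (a mod L) * L + (b mod L)"

text \<open>The four nearest neighbours (with multiplicity) of site k.\<close>
definition nbrs :: "nat \<Rightarrow> nat \<Rightarrow> nat list" where
  "nbrs L k = (let a = k div L; b = k mod L in
     [site L (a + 1) b, site L (a + L - 1) b, site L a (b + 1), site L a (b + L - 1)])"

definition V :: "nat \<Rightarrow> complex \<Rightarrow> complex \<Rightarrow> complex \<Rightarrow> (nat \<Rightarrow> complex) \<Rightarrow> complex" where
  "V L lam mu J q = (\<Sum>i<L^2. lam / 24 * q i ^ 4 - mu^2 / 2 * q i ^ 2
      + J / 4 * sum_list (map (\<lambda>j. (q i - q j)^2) (nbrs L i)))"

definition pderiv_at :: "((nat \<Rightarrow> complex) \<Rightarrow> complex) \<Rightarrow> nat \<Rightarrow> (nat \<Rightarrow> complex) \<Rightarrow> complex" where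
  "pderiv_at F i q = deriv (\<lambda>t. F (q(i := t))) (q i)"

definition hessian :: "((nat \<Rightarrow> complex) \<Rightarrow> complex) \<Rightarrow> nat \<Rightarrow> (nat \<Rightarrow> complex) \<Rightarrow> complex mat" where
  "hessian F N q = mat N N (\<lambda>(i, j). pderiv_at (pderiv_at F j) i q)"


definition A_set :: "nat \<Rightarrow> complex \<Rightarrow> complex \<Rightarrow> ((nat \<Rightarrow> complex) \<times> complex) set" where
  "A_set L lam mu = {(q, J). (\<forall>i\<ge>L^2. q i = 0)
      \<and> (\<forall>i<L^2. pderiv_at (V L lam mu J) i q = 0)
      \<and> det (hessian (V L lam mu J) (L^2) q) = 0}"

definition S_set :: "nat \<Rightarrow> complex \<Rightarrow> complex \<Rightarrow> complex set" where
  "S_set L lam mu = {J. \<exists>q. (q, J) \<in> A_set L lam mu}"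

end

theory Submission
  imports Defs "HOL-Library.FuncSet"
begin

section \<open>Polynomial functions in (J, q)\<close>

inductive_set mpolys :: "nat \<Rightarrow> (complex \<Rightarrow> (nat \<Rightarrow> complex) \<Rightarrow> complex) set" for n where
  mC: "(\<lambda>J q. poly c J) \<in> mpolys n"
| mX: "i < n \<Longrightarrow> (\<lambda>J q. q i) \<in> mpolys n"
| mA: "f \<in> mpolys n \<Longrightarrow> g \<in> mpolys n \<Longrightarrow> (\<lambda>J q. f J q + g J q) \<in> mpolys n"
| mM: "f \<in> mpolys n \<Longrightarrow> g \<in> mpolys n \<Longrightarrow> (\<lambda>J q. f J q * g J q) \<in> mpolys n"

lemma mpolys_const: "(\<lambda>J q. c) \<in> mpolys n"
  using mC[of "[:c:]" n] by simp

lemma mpolys_J: "(\<lambda>J q. J) \<in> mpolys n"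
  using mC[of "[:0,1:]" n] by simp

lemma mpolys_Jdiv: "(\<lambda>J q. J / c) \<in> mpolys n"
proof -
  have "(\<lambda>J q. poly [:0, 1/c:] J) \<in> mpolys n" by (rule mC)
  thus ?thesis by (simp add: divide_inverse mult.commute)
qed

lemma mpolys_sub: "f \<in> mpolys n \<Longrightarrow> g \<in> mpolys n \<Longrightarrow> (\<lambda>J q. f J q - g J q) \<in> mpolys n"
proof -
  assume f: "f \<in> mpolys n" and g: "g \<in> mpolys n"
  have "(\<lambda>J q. f J q + (-1) * g J q) \<in> mpolys n"
    by (intro mA mM f g mpolys_const)
  thus ?thesis by simp
qed

lemma mpolys_sum: "finite A \<Longrightarrow> (\<And>a. a \<in> A \<Longrightarrow> f a \<in> mpolys n) \<Longrightarrow> (\<lambda>J q. \<Sum>a\<in>A. f a J q) \<in> mpolys n"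
proof (induction A rule: finite_induct)
  case empty
  then show ?case using mpolys_const[of 0 n] by simp
next
  case (insert x F)
  have "(\<lambda>J q. f x J q + (\<Sum>a\<in>F. f a J q)) \<in> mpolys n"
    using insert by (intro mA) auto
  then show ?case using insert by simp
qed

lemma mpolys_prod: "finite A \<Longrightarrow> (\<And>a. a \<in> A \<Longrightarrow> f a \<in> mpolys n) \<Longrightarrow> (\<lambda>J q. \<Prod>a\<in>A. f a J q) \<in> mpolys n"
proof (induction A rule: finite_induct)
  case empty
  then show ?case using mpolys_const[of 1 n] by simp
next
  case (insert x F)
  have "(\<lambda>J q. f x J q * (\<Prod>a\<in>F. f a J q)) \<in> mpolys n"
    using insert by (intro mM) auto
  then show ?case using insert by simp
qed

lemma mpolys_sum_list: "(\<And>a. a \<in> set xs \<Longrightarrow> f a \<in> mpolys n) \<Longrightarrow> (\<lambda>J q. sum_list (map (\<lambda>a. f a J q) xs)) \<in> mpolys n"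
proof (induction xs)
  case Nil
  then show ?case using mpolys_const[of 0 n] by simp
next
  case (Cons x xs)
  have "(\<lambda>J q. f x J q + sum_list (map (\<lambda>a. f a J q) xs)) \<in> mpolys n"
    using Cons by (intro mA) auto
  then show ?case by simp
qed

lemma mpolys_pow: "f \<in> mpolys n \<Longrightarrow> (\<lambda>J q. f J q ^ k) \<in> mpolys n"
proof (induction k)
  case 0
  then show ?case using mpolys_const[of 1 n] by simp
next
  case (Suc k)
  have "(\<lambda>J q. f J q * f J q ^ k) \<in> mpolys n" using Suc by (intro mM) auto
  then show ?case by simp
qed

lemma mpolys_deriv:
  assumes "f \<in> mpolys n"
  shows "\<exists>g\<in>mpolys n. \<forall>J q. ((\<lambda>t. f J (q(i:=t))) has_field_derivative g J q) (at (q i))"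
  using assms
proof (induction f rule: mpolys.induct)
  case (mC c)
  show ?case by (rule bexI[of _ "\<lambda>J q. 0"]) (auto intro: mpolys_const)
next
  case (mX j)
  show ?case
  proof (cases "j = i")
    case True
    show ?thesis by (rule bexI[of _ "\<lambda>J q. 1"]) (auto simp: True intro: mpolys_const DERIV_ident)
  next
    case False
    show ?thesis by (rule bexI[of _ "\<lambda>J q. 0"]) (auto simp: False intro: mpolys_const)
  qed
next
  case (mA f g)
  then obtain f' g' where "f' \<in> mpolys n" "g' \<in> mpolys n"
    and df: "\<forall>J q. ((\<lambda>t. f J (q(i:=t))) has_field_derivative f' J q) (at (q i))"
    and dg: "\<forall>J q. ((\<lambda>t. g J (q(i:=t))) has_field_derivative g' J q) (at (q i))" by blast
  have "\<forall>J q. ((\<lambda>t. f J (q(i:=t)) + g J (q(i:=t))) has_field_derivative f' J q + g' J q) (at (q i))"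
    using DERIV_add df dg by blast
  moreover have "(\<lambda>J q. f' J q + g' J q) \<in> mpolys n" by (rule mpolys.mA) fact+
  ultimately show ?case by (intro bexI) assumption+
next
  case (mM f g)
  then obtain f' g' where "f' \<in> mpolys n" "g' \<in> mpolys n"
    and df: "\<forall>J q. ((\<lambda>t. f J (q(i:=t))) has_field_derivative f' J q) (at (q i))"
    and dg: "\<forall>J q. ((\<lambda>t. g J (q(i:=t))) has_field_derivative g' J q) (at (q i))" by blast
  have "\<forall>J q. ((\<lambda>t. f J (q(i:=t)) * g J (q(i:=t))) has_field_derivative f' J q * g J q + g' J q * f J q) (at (q i))"
  proof (intro allI)
    fix J q
    show "((\<lambda>t. f J (q(i:=t)) * g J (q(i:=t))) has_field_derivative f' J q * g J q + g' J q * f J q) (at (q i))"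
      using DERIV_mult[OF df[rule_format, of J q] dg[rule_format, of J q]] by simp
  qed
  moreover have "(\<lambda>J q. f' J q * g J q + g' J q * f J q) \<in> mpolys n"
    by (intro mpolys.mA mpolys.mM mM.hyps \<open>f' \<in> _\<close> \<open>g' \<in> _\<close>)
  ultimately show ?case by (intro bexI) assumption+
qed

lemma mpolys_pderiv:
  assumes "f \<in> mpolys n"
  shows "\<exists>g\<in>mpolys n. \<forall>J q. pderiv_at (f J) i q = g J q"
proof -
  obtain g where g: "g \<in> mpolys n" "\<forall>J q. ((\<lambda>t. f J (q(i:=t))) has_field_derivative g J q) (at (q i))"
    using mpolys_deriv[OF assms] by blast
  show ?thesis
    using g by (intro bexI[of _ g]) (auto simp: pderiv_at_def intro: DERIV_imp_deriv)
qed


definition Lin :: "nat \<Rightarrow> nat \<Rightarrow> (nat \<Rightarrow> complex) \<Rightarrow> complex" where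
  "Lin L i q = (\<Sum>i'<L^2. sum_list (map (\<lambda>j. (q i' - q j) * ((if i' = i then 1 else 0) - (if j = i then 1 else 0))) (nbrs L i'))) / 2"

lemma d_upd: "((\<lambda>t. (q(i:=t)) k) has_field_derivative (if k = i then 1 else 0)) (at x)"
proof (cases "k = i")
  case True
  then show ?thesis by (simp add: DERIV_ident)
next
  case False
  then show ?thesis by simp
qed

lemma DERIV_sum_list:
  "(\<And>j. j \<in> set xs \<Longrightarrow> ((\<lambda>t. f t j) has_field_derivative f' j) (at x)) \<Longrightarrow>
   ((\<lambda>t. sum_list (map (f t) xs)) has_field_derivative sum_list (map f' xs)) (at x)"
proof (induction xs)
  case Nil
  then show ?case by simp
next
  case (Cons x xs)
  then show ?case by (simp add: DERIV_add)
qed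

lemma grad_DERIV:
  "((\<lambda>t. V L lam mu J (q(i:=t))) has_field_derivative
     (\<Sum>i'<L^2. (if i' = i then lam/6 * q i' ^ 3 - mu^2 * q i' else 0) +
        J * (sum_list (map (\<lambda>j. (q i' - q j) * ((if i' = i then 1 else 0) - (if j = i then 1 else 0))) (nbrs L i')) / 2))) (at (q i))"
  unfolding V_def
proof (rule DERIV_sum)
  fix i' assume "i' \<in> {..<L^2}"
  let ?u = "\<lambda>t. q(i:=t)"
  have h1: "((\<lambda>t. lam / 24 * (?u t) i' ^ 4 - mu^2/2 * (?u t) i' ^ 2) has_field_derivative
     (if i' = i then lam/6 * q i' ^ 3 - mu^2 * q i' else 0)) (at (q i))"
    by (rule derivative_eq_intros d_upd refl | simp)+
  have h2: "((\<lambda>t. sum_list (map (\<lambda>j. ((?u t) i' - (?u t) j)^2) (nbrs L i'))) has_field_derivative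
     sum_list (map (\<lambda>j. 2 * ((q i' - q j) * ((if i' = i then 1 else 0) - (if j = i then 1 else 0)))) (nbrs L i'))) (at (q i))"
  proof (rule DERIV_sum_list)
    fix j
    show "((\<lambda>t. ((?u t) i' - (?u t) j)^2) has_field_derivative
      2 * ((q i' - q j) * ((if i' = i then 1 else 0) - (if j = i then 1 else 0)))) (at (q i))"
      by (rule derivative_eq_intros d_upd refl | simp)+
  qed
  have e: "sum_list (map (\<lambda>j. 2 * ((q i' - q j) * ((if i' = i then 1 else (0::complex)) - (if j = i then 1 else 0)))) (nbrs L i'))
     = 2 * sum_list (map (\<lambda>j. (q i' - q j) * ((if i' = i then 1 else 0) - (if j = i then 1 else 0))) (nbrs L i'))"
    by (simp add: sum_list_const_mult)
  show "((\<lambda>t. lam / 24 * (?u t) i' ^ 4 - mu^2/2 * (?u t) i' ^ 2 + J / 4 * sum_list (map (\<lambda>j. ((?u t) i' - (?u t) j)^2) (nbrs L i'))) has_field_derivative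
     (if i' = i then lam/6 * q i' ^ 3 - mu^2 * q i' else 0) +
        J * (sum_list (map (\<lambda>j. (q i' - q j) * ((if i' = i then 1 else 0) - (if j = i then 1 else 0))) (nbrs L i')) / 2)) (at (q i))"
    using DERIV_add[OF h1 DERIV_cmult[OF h2, of "J/4"]] unfolding e by (simp add: algebra_simps)
qed

lemma grad:
  assumes "i < L^2"
  shows "pderiv_at (V L lam mu J) i q = lam/6 * q i ^ 3 - mu^2 * q i + J * Lin L i q"
proof -
  have "pderiv_at (V L lam mu J) i q = (\<Sum>i'<L^2. (if i' = i then lam/6 * q i' ^ 3 - mu^2 * q i' else 0) +
        J * (sum_list (map (\<lambda>j. (q i' - q j) * ((if i' = i then 1 else 0) - (if j = i then 1 else 0))) (nbrs L i')) / 2))"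
    unfolding pderiv_at_def by (rule DERIV_imp_deriv[OF grad_DERIV])
  also have "\<dots> = lam/6 * q i ^ 3 - mu^2 * q i + J * Lin L i q"
    using assms by (simp add: sum.distrib Lin_def sum_distrib_left sum_divide_distrib)
  finally show ?thesis .
qed


lemma site_lt: "0 < L \<Longrightarrow> site L a b < L^2"
proof -
  assume L: "0 < L"
  have "a mod L \<le> L - 1" "b mod L < L" using L by (auto simp: less_Suc_eq_le[symmetric])
  hence "(a mod L) * L + b mod L < (L - 1) * L + L"
    by (meson add_le_less_mono mult_le_mono1)
  also have "\<dots> = L^2" using L by (simp add: power2_eq_square algebra_simps)
  finally show ?thesis by (simp add: site_def)
qed

lemma nbrs_lt: "0 < L \<Longrightarrow> j \<in> set (nbrs L i) \<Longrightarrow> j < L^2"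
  unfolding nbrs_def Let_def using site_lt by auto

lemma V_mpoly: "0 < L \<Longrightarrow> (\<lambda>J q. V L lam mu J q) \<in> mpolys (L^2)"
  unfolding V_def
  by (intro mpolys_sum mpolys_sum_list mA mM mpolys_sub mpolys_const mpolys_J mpolys_Jdiv mpolys_pow mX)
     (auto dest: nbrs_lt)

lemma hess_mpoly:
  assumes L: "0 < L"
  shows "(\<lambda>J q. det (hessian (V L lam mu J) (L^2) q)) \<in> mpolys (L^2)"
proof -
  let ?n = "L^2"
  have "\<forall>i. \<exists>g\<in>mpolys ?n. \<forall>J q. pderiv_at (V L lam mu J) i q = g J q"
    using mpolys_pderiv[OF V_mpoly[OF L]] by blast
  then obtain G1 where G1: "\<And>i. G1 i \<in> mpolys ?n" "\<And>i J q. pderiv_at (V L lam mu J) i q = G1 i J q"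
    by metis
  have "\<forall>i j. \<exists>g\<in>mpolys ?n. \<forall>J q. pderiv_at (G1 j J) i q = g J q"
    using mpolys_pderiv[OF G1(1)] by blast
  then obtain G2 where G2: "\<And>i j. G2 i j \<in> mpolys ?n" "\<And>i j J q. pderiv_at (G1 j J) i q = G2 i j J q"
    by metis
  have pe: "pderiv_at (V L lam mu J) j = G1 j J" for J j
    using G1(2) by auto
  have "det (hessian (V L lam mu J) ?n q) = (\<Sum>p\<in>{p. p permutes {0..<?n}}. signof p * (\<Prod>i = 0..<?n. G2 i (p i) J q))" for J q
    unfolding hessian_def pe G2(2)
    by (subst det_def'[of _ ?n]) auto
  moreover have "(\<lambda>J q. \<Sum>p\<in>{p. p permutes {0..<?n}}. signof p * (\<Prod>i = 0..<?n. G2 i (p i) J q)) \<in> mpolys ?n"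
    by (intro mpolys_sum mM mpolys_const mpolys_prod G2(1)) (auto simp: finite_permutations)
  ultimately show ?thesis by simp
qed


section \<open>Reduction modulo the critical equations\<close>

definition monb :: "nat \<Rightarrow> (nat \<Rightarrow> nat) \<Rightarrow> (nat \<Rightarrow> complex) \<Rightarrow> complex" where
  "monb n b q = (\<Prod>i<n. q i ^ b i)"

definition Eset :: "nat \<Rightarrow> (nat \<Rightarrow> nat) set" where
  "Eset n = PiE {..<n} (\<lambda>_. {..2})"

lemma finite_Eset: "finite (Eset n)"
  unfolding Eset_def by (intro finite_PiE) auto

lemma card_Eset: "card (Eset n) = 3^n"
  unfolding Eset_def by (subst card_PiE) auto

definition enc :: "nat \<Rightarrow> nat \<Rightarrow> (nat \<Rightarrow> nat)" where
  "enc n = (SOME h. bij_betw h {0..<3^n} (Eset n))"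

lemma enc_bij: "bij_betw (enc n) {0..<3^n} (Eset n)"
proof -
  have "\<exists>h::nat \<Rightarrow> nat \<Rightarrow> nat. bij_betw h {0..<3^n} (Eset n)"
    using ex_bij_betw_nat_finite[OF finite_Eset[of n]] unfolding card_Eset .
  thus ?thesis unfolding enc_def by (rule someI_ex)
qed

lemma enc_surj: "e \<in> Eset n \<Longrightarrow> \<exists>k<3^n. enc n k = e"
proof -
  assume e: "e \<in> Eset n"
  have "e \<in> enc n ` {0..<3^n}" using enc_bij[of n] e by (simp add: bij_betw_def)
  then obtain k where "k \<in> {0..<3^n}" "e = enc n k" by (rule imageE)
  thus ?thesis by auto
qed

definition mon :: "nat \<Rightarrow> nat \<Rightarrow> (nat \<Rightarrow> complex) \<Rightarrow> complex" where
  "mon n k = monb n (enc n k)"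

definition crit :: "nat \<Rightarrow> complex \<Rightarrow> complex \<Rightarrow> complex \<Rightarrow> (nat \<Rightarrow> complex) \<Rightarrow> bool" where
  "crit L lam mu J q = (\<forall>i<L^2. pderiv_at (V L lam mu J) i q = 0)"

definition reducible :: "nat \<Rightarrow> complex \<Rightarrow> complex \<Rightarrow> (complex \<Rightarrow> (nat \<Rightarrow> complex) \<Rightarrow> complex) \<Rightarrow> bool" where
  "reducible L lam mu f = (\<exists>r. \<forall>J q. crit L lam mu J q \<longrightarrow> f J q = (\<Sum>k<3^(L^2). poly (r k) J * mon (L^2) k q))"

lemma red_cong: "(\<And>J q. crit L lam mu J q \<Longrightarrow> f J q = g J q) \<Longrightarrow> reducible L lam mu g \<Longrightarrow> reducible L lam mu f"
  unfolding reducible_def by metis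

lemma red_add: "reducible L lam mu f \<Longrightarrow> reducible L lam mu g \<Longrightarrow> reducible L lam mu (\<lambda>J q. f J q + g J q)"
proof -
  assume "reducible L lam mu f" "reducible L lam mu g"
  then obtain r s where r: "\<forall>J q. crit L lam mu J q \<longrightarrow> f J q = (\<Sum>k<3^(L^2). poly (r k) J * mon (L^2) k q)"
    and s: "\<forall>J q. crit L lam mu J q \<longrightarrow> g J q = (\<Sum>k<3^(L^2). poly (s k) J * mon (L^2) k q)"
    unfolding reducible_def by blast
  show ?thesis unfolding reducible_def
    by (rule exI[of _ "\<lambda>k. r k + s k"]) (simp add: r s sum.distrib distrib_right)
qed

lemma red_scal: "reducible L lam mu f \<Longrightarrow> reducible L lam mu (\<lambda>J q. poly c J * f J q)"
proof -
  assume "reducible L lam mu f"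
  then obtain r where r: "\<forall>J q. crit L lam mu J q \<longrightarrow> f J q = (\<Sum>k<3^(L^2). poly (r k) J * mon (L^2) k q)"
    unfolding reducible_def by blast
  show ?thesis unfolding reducible_def
    by (rule exI[of _ "\<lambda>k. c * r k"]) (simp add: r sum_distrib_left mult.assoc)
qed

lemma red_cmult: "reducible L lam mu f \<Longrightarrow> reducible L lam mu (\<lambda>J q. c * f J q)"
  using red_scal[of L lam mu f "[:c:]"] by simp

lemma red_Jmult: "reducible L lam mu f \<Longrightarrow> reducible L lam mu (\<lambda>J q. J * f J q)"
  using red_scal[of L lam mu f "[:0,1:]"] by simp

lemma red_zero: "reducible L lam mu (\<lambda>J q. 0)"
  unfolding reducible_def by (rule exI[of _ "\<lambda>k. 0"]) simp

lemma red_sub: "reducible L lam mu f \<Longrightarrow> reducible L lam mu g \<Longrightarrow> reducible L lam mu (\<lambda>J q. f J q - g J q)"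
  using red_add[of L lam mu f "\<lambda>J q. (-1) * g J q"] red_cmult[of L lam mu g "-1"] by simp

lemma red_sum: "finite A \<Longrightarrow> (\<And>a. a \<in> A \<Longrightarrow> reducible L lam mu (f a)) \<Longrightarrow> reducible L lam mu (\<lambda>J q. \<Sum>a\<in>A. f a J q)"
proof (induction A rule: finite_induct)
  case empty
  then show ?case using red_zero by simp
next
  case (insert x F)
  then show ?case using red_add[of L lam mu "f x" "\<lambda>J q. \<Sum>a\<in>F. f a J q"] by simp
qed

lemma red_sum_list: "(\<And>a. a \<in> set xs \<Longrightarrow> reducible L lam mu (f a)) \<Longrightarrow> reducible L lam mu (\<lambda>J q. sum_list (map (\<lambda>a. f a J q) xs))"
proof (induction xs)
  case Nil
  then show ?case using red_zero by simp
next
  case (Cons x xs)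
  then show ?case using red_add[of L lam mu "f x" "\<lambda>J q. sum_list (map (\<lambda>a. f a J q) xs)"] by simp
qed

lemma red_basis: "k < 3^(L^2) \<Longrightarrow> reducible L lam mu (\<lambda>J q. mon (L^2) k q)"
proof -
  assume k: "k < 3^(L^2)"
  have "(\<Sum>l<3^(L^2). poly [:if l = k then 1 else 0:] J * mon (L^2) l q) = (\<Sum>l<3^(L^2). if l = k then mon (L^2) l q else 0)" for J q
    by (intro sum.cong) auto
  moreover have "(\<Sum>l<3^(L^2). if l = k then mon (L^2) l q else 0) = mon (L^2) k q" for q using k by simp
  ultimately show ?thesis unfolding reducible_def
    by (intro exI[of _ "\<lambda>l. [:if l = k then 1 else 0:]"]) simp
qed

lemma monb_upd: "i < n \<Longrightarrow> monb n (b(i := x)) q = monb n (b(i := 0)) q * q i ^ x"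
  unfolding monb_def
  by (simp add: prod.remove[of "{..<n}" i] mult.commute)

lemma monb_add1: "i < n \<Longrightarrow> monb n (b(i := b i + x)) q = monb n b q * q i ^ x"
proof -
  assume i: "i < n"
  have "monb n b q = monb n (b(i := b i)) q" by simp
  also have "\<dots> = monb n (b(i := 0)) q * q i ^ b i" by (rule monb_upd[OF i])
  finally show ?thesis using monb_upd[OF i, of b "b i + x" q] by (simp add: power_add mult.assoc)
qed

lemma sum_upd: "i < (n::nat) \<Longrightarrow> (\<Sum>k<n. (b(i := x)) k) + b i = (\<Sum>k<n. b k) + (x::nat)"
proof -
  assume i: "i < n"
  have "(\<Sum>k<n. (b(i := x)) k) = x + (\<Sum>k\<in>{..<n} - {i}. b k)"
    using i by (subst sum.remove[of _ i]) auto
  moreover have "(\<Sum>k<n. b k) = b i + (\<Sum>k\<in>{..<n} - {i}. b k)"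
    using i by (subst sum.remove[of _ i]) auto
  ultimately show ?thesis by simp
qed

lemma monb_restrict: "monb n (restrict b {..<n}) = monb n b"
  unfolding monb_def by (intro ext prod.cong) auto

lemma red_monb:
  assumes L: "0 < L" and lam: "lam \<noteq> 0"
  shows "reducible L lam mu (\<lambda>J q. monb (L^2) b q)"
proof (induction "\<Sum>k<L^2. b k" arbitrary: b rule: less_induct)
  case less
  let ?n = "L^2"
  show ?case
  proof (cases "\<forall>i<?n. b i \<le> 2")
    case True
    have "restrict b {..<?n} \<in> Eset ?n" using True unfolding Eset_def by auto
    then obtain k where k: "k < 3^?n" "enc ?n k = restrict b {..<?n}"
      using enc_surj by blast
    have "reducible L lam mu (\<lambda>J q. mon ?n k q)" by (rule red_basis[OF k(1)])
    thus ?thesis unfolding mon_def k(2) monb_restrict .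
  next
    case False
    then obtain i where i: "i < ?n" "b i > 2" by auto
    define b' where "b' = b(i := b i - 3)"
    have bb: "b = b'(i := b' i + 3)" using i unfolding b'_def by auto
    define M where "M j = monb ?n (b'(j := b' j + 1))" for j
    have degM: "(\<Sum>k<?n. (b'(j := b' j + 1)) k) < (\<Sum>k<?n. b k)" if "j < ?n" for j
    proof -
      have "(\<Sum>k<?n. (b'(j := b' j + 1)) k) + b' j = (\<Sum>k<?n. b' k) + (b' j + 1)"
        by (rule sum_upd[OF that])
      moreover have "(\<Sum>k<?n. b' k) + b i = (\<Sum>k<?n. b k) + (b i - 3)"
        unfolding b'_def by (rule sum_upd[OF i(1)])
      ultimately show ?thesis using i(2) by linarith
    qed
    have redM: "reducible L lam mu (\<lambda>J q. M j q)" if "j < ?n" for j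
      unfolding M_def by (rule less.hyps[OF degM[OF that]])
    define g where "g J q = (6/lam) * (mu^2 * M i q - J * ((\<Sum>i'<?n. sum_list (map (\<lambda>j. (M i' q - M j q) * ((if i' = i then 1 else 0) - (if j = i then 1 else 0))) (nbrs L i'))) / 2))" for J q
    define cc where "cc i' j = ((if i' = i then 1 else 0) - (if j = i then 1 else (0::complex)))" for i' j
    define S where "S q = (\<Sum>i'<?n. sum_list (map (\<lambda>j. (M i' q - M j q) * cc i' j) (nbrs L i')))" for q
    have rS: "reducible L lam mu (\<lambda>J q. S q)"
      unfolding S_def
    proof (rule red_sum[where f="\<lambda>i' J q. sum_list (map (\<lambda>j. (M i' q - M j q) * cc i' j) (nbrs L i'))"])
      fix i' assume i': "i' \<in> {..<?n}"
      show "reducible L lam mu (\<lambda>J q. sum_list (map (\<lambda>j. (M i' q - M j q) * cc i' j) (nbrs L i')))"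
      proof (rule red_sum_list[where f="\<lambda>j J q. (M i' q - M j q) * cc i' j"])
        fix j assume "j \<in> set (nbrs L i')"
        hence j: "j < ?n" by (rule nbrs_lt[OF L])
        show "reducible L lam mu (\<lambda>J q. (M i' q - M j q) * cc i' j)"
          using red_cmult[OF red_sub[OF redM redM], of i' j "cc i' j"] i' j by (simp add: mult.commute)
      qed
    qed simp
    have a1: "reducible L lam mu (\<lambda>J q. J * (S q / 2))"
      using red_Jmult[OF red_cmult[OF rS, of "1/2"]] by simp
    have a2: "reducible L lam mu (\<lambda>J q. (6/lam) * (mu^2 * M i q - J * (S q / 2)))"
      by (rule red_cmult[OF red_sub[OF red_cmult[OF redM[OF i(1)]] a1]])
    have gg: "g = (\<lambda>J q. (6/lam) * (mu^2 * M i q - J * (S q / 2)))"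
      by (intro ext) (simp add: g_def S_def cc_def)
    have rg: "reducible L lam mu g" unfolding gg by (rule a2)
    have eqg: "monb ?n b q = g J q" if c: "crit L lam mu J q" for J q
    proof -
      have "pderiv_at (V L lam mu J) i q = 0" using c i(1) unfolding crit_def by blast
      hence e: "lam/6 * q i ^ 3 - mu^2 * q i + J * Lin L i q = 0" by (simp only: grad[OF i(1)])
      have "lam/6 * q i ^ 3 = (lam/6 * q i ^ 3 - mu^2 * q i + J * Lin L i q) + (mu^2 * q i - J * Lin L i q)"
        by (simp add: algebra_simps)
      hence e2: "lam/6 * q i ^ 3 = mu^2 * q i - J * Lin L i q" unfolding e by simp
      have q3: "q i ^ 3 = (6/lam) * (mu^2 * q i - J * Lin L i q)"
        unfolding e2[symmetric] using lam by simp
      have Mj: "M j q = monb ?n b' q * q j" if "j < ?n" for j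
        unfolding M_def by (simp only: monb_add1[OF that] power_one_right)
      have "monb ?n b q = monb ?n b' q * q i ^ 3" by (subst bb) (rule monb_add1[OF i(1)])
      also have "\<dots> = (6/lam) * (mu^2 * (monb ?n b' q * q i) - J * (monb ?n b' q * Lin L i q))"
        unfolding q3 by (simp add: algebra_simps)
      also have "monb ?n b' q * Lin L i q = (\<Sum>i'<?n. sum_list (map (\<lambda>j. (M i' q - M j q) * ((if i' = i then 1 else 0) - (if j = i then 1 else 0))) (nbrs L i'))) / 2"
      proof -
        have "monb ?n b' q * Lin L i q = (\<Sum>i'<?n. sum_list (map (\<lambda>j. monb ?n b' q * ((q i' - q j) * ((if i' = i then 1 else 0) - (if j = i then 1 else 0)))) (nbrs L i'))) / 2"
          unfolding Lin_def times_divide_eq_right sum_distrib_left sum_list_const_mult[symmetric] ..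
        also have "\<dots> = (\<Sum>i'<?n. sum_list (map (\<lambda>j. (M i' q - M j q) * ((if i' = i then 1 else 0) - (if j = i then 1 else 0))) (nbrs L i'))) / 2"
        proof -
          have "sum_list (map (\<lambda>j. monb ?n b' q * ((q i' - q j) * ((if i' = i then 1 else 0) - (if j = i then 1 else 0)))) (nbrs L i'))
             = sum_list (map (\<lambda>j. (M i' q - M j q) * ((if i' = i then 1 else 0) - (if j = i then 1 else 0))) (nbrs L i'))"
            if "i' < ?n" for i'
            using that by (intro arg_cong[where f=sum_list] map_cong refl)
              (auto simp: Mj nbrs_lt[OF L] algebra_simps)
          thus ?thesis by (intro arg_cong[where f="\<lambda>x. x / 2"] sum.cong) auto
        qed
        finally show ?thesis .
      qed
      finally show ?thesis unfolding g_def using Mj[OF i(1)] by simp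
    qed
    show ?thesis
    proof (rule red_cong[of L lam mu _ g])
      fix J q assume "crit L lam mu J q"
      thus "monb ?n b q = g J q" by (rule eqg)
    qed (rule rg)
  qed
qed



lemma monb_mpoly: "(\<lambda>J q. monb n b q) \<in> mpolys n"
  unfolding monb_def by (intro mpolys_prod mpolys_pow mX) auto

lemma mon_mpoly: "(\<lambda>J q. mon n k q) \<in> mpolys n"
  unfolding mon_def by (rule monb_mpoly)

lemma monb_var: "i < n \<Longrightarrow> monb n (\<lambda>j. if j = i then 1 else 0) q = q i"
proof -
  assume i: "i < n"
  have "monb n (\<lambda>j. if j = i then 1 else 0) q = (\<Prod>j<n. if j = i then q j else 1)"
    unfolding monb_def by (intro prod.cong) auto
  also have "\<dots> = q i" using i by (simp add: prod.delta)
  finally show ?thesis .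
qed

lemma monb_zero: "monb n (\<lambda>j. 0) q = 1"
  unfolding monb_def by simp

lemma mon_mult: "mon n k q * mon n l q = monb n (\<lambda>x. enc n k x + enc n l x) q"
  unfolding mon_def monb_def by (simp add: prod.distrib power_add)

lemma red_mult:
  assumes L: "0 < L" and lam: "lam \<noteq> 0"
    and f: "reducible L lam mu f" and g: "reducible L lam mu g"
  shows "reducible L lam mu (\<lambda>J q. f J q * g J q)"
proof -
  let ?n = "L^2" let ?N = "3^(L^2)"
  obtain r where r: "\<forall>J q. crit L lam mu J q \<longrightarrow> f J q = (\<Sum>k<?N. poly (r k) J * mon ?n k q)"
    using f unfolding reducible_def by blast
  obtain s where s: "\<forall>J q. crit L lam mu J q \<longrightarrow> g J q = (\<Sum>k<?N. poly (s k) J * mon ?n k q)"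
    using g unfolding reducible_def by blast
  define T where "T J q = (\<Sum>k<?N. \<Sum>l<?N. poly (r k * s l) J * monb ?n (\<lambda>x. enc ?n k x + enc ?n l x) q)" for J q
  have rT: "reducible L lam mu T"
    unfolding T_def
  proof (rule red_sum[where f="\<lambda>k J q. \<Sum>l<?N. poly (r k * s l) J * monb ?n (\<lambda>x. enc ?n k x + enc ?n l x) q"])
    fix k
    show "reducible L lam mu (\<lambda>J q. \<Sum>l<?N. poly (r k * s l) J * monb ?n (\<lambda>x. enc ?n k x + enc ?n l x) q)"
    proof (rule red_sum[where f="\<lambda>l J q. poly (r k * s l) J * monb ?n (\<lambda>x. enc ?n k x + enc ?n l x) q"])
      fix l
      show "reducible L lam mu (\<lambda>J q. poly (r k * s l) J * monb ?n (\<lambda>x. enc ?n k x + enc ?n l x) q)"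
        by (rule red_scal[OF red_monb[OF L lam]])
    qed simp
  qed simp
  have eqT: "f J q * g J q = T J q" if "crit L lam mu J q" for J q
  proof -
    have "f J q * g J q = (\<Sum>k<?N. poly (r k) J * mon ?n k q) * (\<Sum>l<?N. poly (s l) J * mon ?n l q)"
      using r s that by simp
    also have "\<dots> = (\<Sum>k<?N. \<Sum>l<?N. (poly (r k) J * mon ?n k q) * (poly (s l) J * mon ?n l q))"
      by (rule sum_product)
    also have "\<dots> = T J q"
      unfolding T_def by (intro sum.cong refl) (simp add: mon_mult[symmetric] algebra_simps)
    finally show ?thesis .
  qed
  show ?thesis
  proof (rule red_cong[of L lam mu _ T])
    fix J q assume "crit L lam mu J q"
    thus "f J q * g J q = T J q" by (rule eqT)
  qed (rule rT)
qed

lemma mpolys_red: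
  assumes L: "0 < L" and lam: "lam \<noteq> 0"
  shows "f \<in> mpolys (L^2) \<Longrightarrow> reducible L lam mu f"
proof (induction f rule: mpolys.induct)
  case (mC c)
  show ?case using red_scal[OF red_monb[OF L lam, of mu "\<lambda>_. 0"], of c] by (simp add: monb_zero)
next
  case (mX i)
  show ?case using red_monb[OF L lam, of mu "\<lambda>j. if j = i then 1 else 0"] by (simp add: monb_var[OF mX])
next
  case (mA f g)
  show ?case by (rule red_add[OF mA.IH])
next
  case (mM f g)
  show ?case by (rule red_mult[OF L lam mM.IH])
qed



section \<open>Grid of critical points at J = 0 and dual functionals\<close>

definition rt :: "complex \<Rightarrow> nat \<Rightarrow> complex" where
  "rt c s = (if s = 0 then 0 else if s = 1 then c else -c)"

definition wt :: "complex \<Rightarrow> nat \<Rightarrow> nat \<Rightarrow> complex" where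
  "wt c d s = (if d = 0 then (if s = 0 then 1 else 0)
     else if d = 1 then (if s = 0 then 0 else if s = 1 then 1/(2*c) else -1/(2*c))
     else (if s = 0 then -1/c^2 else 1/(2*c^2)))"

lemma uni_dual:
  assumes c: "c \<noteq> 0" and a: "a \<le> 2" and d: "d \<le> 2"
  shows "(\<Sum>s\<le>2. wt c d s * rt c s ^ a) = (if a = d then 1 else 0)"
proof -
  have s3: "{..2::nat} = {0,1,2}" by auto
  have "a = 0 \<or> a = 1 \<or> a = 2" "d = 0 \<or> d = 1 \<or> d = 2" using a d by auto
  thus ?thesis unfolding s3 using c
    by (auto simp: wt_def rt_def field_simps power2_eq_square)
qed

definition pt :: "complex \<Rightarrow> (nat \<Rightarrow> nat) \<Rightarrow> nat \<Rightarrow> complex" where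
  "pt c t = (\<lambda>i. rt c (t i))"

lemma dual_sum:
  assumes c: "c \<noteq> 0" and e0: "e0 \<in> Eset n" and e: "e \<in> Eset n"
  shows "(\<Sum>t\<in>Eset n. (\<Prod>i<n. wt c (e0 i) (t i)) * monb n e (pt c t)) = (if e = e0 then 1 else 0)"
proof -
  have "(\<Sum>t\<in>Eset n. (\<Prod>i<n. wt c (e0 i) (t i)) * monb n e (pt c t))
      = (\<Sum>t\<in>Eset n. \<Prod>i<n. wt c (e0 i) (t i) * rt c (t i) ^ e i)"
    unfolding monb_def pt_def by (simp add: prod.distrib)
  also have "\<dots> = (\<Prod>i<n. \<Sum>s\<le>2. wt c (e0 i) s * rt c s ^ e i)"
    unfolding Eset_def by (rule prod_sum_PiE[symmetric]) auto
  also have "\<dots> = (\<Prod>i<n. if e i = e0 i then 1 else 0)"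
    using e e0 unfolding Eset_def by (intro prod.cong refl uni_dual[OF c]) auto
  also have "\<dots> = (if e = e0 then 1 else 0)"
  proof (cases "e = e0")
    case True
    then show ?thesis by simp
  next
    case False
    then obtain i where "e i \<noteq> e0 i" by auto
    moreover have "i < n"
    proof (rule ccontr)
      assume "\<not> i < n"
      hence ni: "i \<notin> {..<n}" by simp
      have "e i = undefined" using e ni unfolding Eset_def by (rule PiE_arb)
      moreover have "e0 i = undefined" using e0 ni unfolding Eset_def by (rule PiE_arb)
      ultimately show False using \<open>e i \<noteq> e0 i\<close> by simp
    qed
    ultimately show ?thesis using False by (auto intro: prod_zero)
  qed
  finally show ?thesis .
qed

lemma dual_zero:
  assumes c: "c \<noteq> 0" and e0: "e0 \<in> Eset n"
    and Z: "\<And>t. t \<in> Eset n \<Longrightarrow> (\<Sum>e\<in>Eset n. U e * monb n e (pt c t)) = 0"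
  shows "U e0 = 0"
proof -
  let ?W = "\<lambda>t. \<Prod>i<n. wt c (e0 i) (t i)"
  have "0 = (\<Sum>t\<in>Eset n. ?W t * (\<Sum>e\<in>Eset n. U e * monb n e (pt c t)))"
    using Z by simp
  also have "\<dots> = (\<Sum>e\<in>Eset n. U e * (\<Sum>t\<in>Eset n. ?W t * monb n e (pt c t)))"
  proof -
    have "(\<Sum>t\<in>Eset n. ?W t * (\<Sum>e\<in>Eset n. U e * monb n e (pt c t)))
        = (\<Sum>t\<in>Eset n. \<Sum>e\<in>Eset n. U e * (?W t * monb n e (pt c t)))"
      by (intro sum.cong refl) (simp add: sum_distrib_left mult_ac)
    also have "\<dots> = (\<Sum>e\<in>Eset n. \<Sum>t\<in>Eset n. U e * (?W t * monb n e (pt c t)))"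
      by (rule sum.swap)
    also have "\<dots> = (\<Sum>e\<in>Eset n. U e * (\<Sum>t\<in>Eset n. ?W t * monb n e (pt c t)))"
      by (simp add: sum_distrib_left)
    finally show ?thesis .
  qed
  also have "\<dots> = (\<Sum>e\<in>Eset n. if e = e0 then U e else 0)"
    by (intro sum.cong refl) (simp add: dual_sum[OF c e0])
  also have "\<dots> = U e0" using e0 finite_Eset by simp
  finally show ?thesis by simp
qed

lemma grad0: "i < L^2 \<Longrightarrow> pderiv_at (V L lam mu 0) i = (\<lambda>q. lam/6 * q i ^ 3 - mu^2 * q i)"
  by (intro ext) (simp add: grad)

lemma hess0:
  assumes i: "i < L^2" and j: "j < L^2"
  shows "pderiv_at (pderiv_at (V L lam mu 0) j) i q = (if i = j then lam/2 * q j ^ 2 - mu^2 else 0)"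
proof -
  have "((\<lambda>t. lam/6 * (q(i:=t)) j ^ 3 - mu^2 * (q(i:=t)) j) has_field_derivative
     (if i = j then lam/2 * q j ^ 2 - mu^2 else 0)) (at (q i))"
    by (rule derivative_eq_intros d_upd refl | simp)+
  thus ?thesis unfolding grad0[OF j] pderiv_at_def by (rule DERIV_imp_deriv)
qed



interpretation poly_ev: comm_ring_hom "\<lambda>p::complex poly. poly p a" for a
  by unfold_locales auto

theorem proposition1:
  fixes L :: nat and lam mu :: complex
  assumes "L \<ge> 2" and "lam \<noteq> 0" and "mu \<noteq> 0"
  shows "finite (S_set L lam mu)"
proof -
  have L: "0 < L" using assms(1) by simp
  note lam = assms(2)
  let ?n = "L^2" let ?N = "3^(L^2)"
  define h where "h J q = det (hessian (V L lam mu J) ?n q)" for J q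
  have hm: "h \<in> mpolys ?n" unfolding h_def[abs_def] by (rule hess_mpoly[OF L])
  have "\<forall>k. reducible L lam mu (\<lambda>J q. h J q * mon ?n k q)"
    using mpolys_red[OF L lam mM[OF hm mon_mpoly]] by blast
  hence "\<forall>k. \<exists>rk. \<forall>J q. crit L lam mu J q \<longrightarrow> h J q * mon ?n k q = (\<Sum>l<?N. poly (rk l) J * mon ?n l q)"
    unfolding reducible_def by blast
  from choice[OF this] obtain r where r: "\<And>k J q. crit L lam mu J q \<Longrightarrow> h J q * mon ?n k q = (\<Sum>l<?N. poly (r k l) J * mon ?n l q)"
    by blast
  define PM where "PM = mat ?N ?N (\<lambda>(k,l). r k l)"
  define Mx where "Mx J = map_mat (\<lambda>p. poly p J) PM" for J
  have Mx_carr: "Mx J \<in> carrier_mat ?N ?N" for J unfolding Mx_def PM_def by simp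
  have Mx_idx: "k < ?N \<Longrightarrow> l < ?N \<Longrightarrow> Mx J $$ (k,l) = poly (r k l) J" for J k l
    unfolding Mx_def PM_def by simp
  have detMx: "det (Mx J) = poly (det PM) J" for J
    unfolding Mx_def by (rule poly_ev.hom_det)
  have z: "restrict (\<lambda>_. 0::nat) {..<?n} \<in> Eset ?n" unfolding Eset_def by auto
  then obtain k0 where k0: "k0 < ?N" "enc ?n k0 = restrict (\<lambda>_. 0::nat) {..<?n}"
    using enc_surj by blast
  have mon0: "mon ?n k0 q = 1" for q
    unfolding mon_def k0(2) monb_restrict by (rule monb_zero)
  have sub: "S_set L lam mu \<subseteq> {J. poly (det PM) J = 0}"
  proof
    fix J assume "J \<in> S_set L lam mu"
    then obtain q where "(q, J) \<in> A_set L lam mu" unfolding S_set_def by blast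
    hence c: "crit L lam mu J q" and h0: "h J q = 0"
      unfolding A_set_def crit_def h_def by auto
    define phi where "phi = vec ?N (\<lambda>l. mon ?n l q)"
    have "phi \<in> carrier_vec ?N" unfolding phi_def by simp
    moreover have "phi \<noteq> 0\<^sub>v ?N"
    proof
      assume "phi = 0\<^sub>v ?N"
      hence "phi $ k0 = 0" using k0(1) by simp
      thus False unfolding phi_def using k0(1) mon0 by simp
    qed
    moreover have "Mx J *\<^sub>v phi = 0\<^sub>v ?N"
    proof (rule eq_vecI)
      fix k assume k: "k < dim_vec (0\<^sub>v ?N :: complex vec)"
      hence k': "k < ?N" by simp
      have "(Mx J *\<^sub>v phi) $ k = (\<Sum>l<?N. poly (r k l) J * mon ?n l q)"
        using k' Mx_carr[of J] unfolding phi_def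
        by (simp add: scalar_prod_def Mx_idx lessThan_atLeast0)
      also have "\<dots> = h J q * mon ?n k q" using r[OF c] by simp
      also have "\<dots> = 0" using h0 by simp
      finally show "(Mx J *\<^sub>v phi) $ k = 0\<^sub>v ?N $ k" using k' by simp
    qed (use Mx_carr[of J] in simp)
    ultimately have "det (Mx J) = 0"
      using det_0_iff_vec_prod_zero[OF Mx_carr[of J]] by blast
    thus "J \<in> {J. poly (det PM) J = 0}" by (simp add: detMx)
  qed
  \<comment> \<open>det PM does not vanish at J = 0\<close>
  define c where "c = csqrt (6 * mu^2 / lam)"
  have c2: "c^2 = 6 * mu^2 / lam" unfolding c_def by simp
  have cnz: "c \<noteq> 0" using c2 lam assms(3) by auto
  have rt_crit: "lam/6 * rt c s ^ 3 - mu^2 * rt c s = 0" for s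
  proof -
    have "lam/6 * rt c s ^ 3 = rt c s * (lam/6 * (rt c s)^2)" by (simp add: power2_eq_square power3_eq_cube)
    moreover have "(rt c s)^2 = 0 \<or> (rt c s)^2 = c^2" unfolding rt_def by auto
    ultimately show ?thesis using c2 lam by (auto simp: rt_def)
  qed
  have rt_hess: "lam/2 * rt c s ^ 2 - mu^2 \<noteq> 0" for s
  proof -
    have "(rt c s)^2 = 0 \<or> (rt c s)^2 = c^2" unfolding rt_def by auto
    thus ?thesis using c2 lam assms(3) by auto
  qed
  have grid_crit: "crit L lam mu 0 (pt c t)" for t
    unfolding crit_def using rt_crit by (simp add: grad0 pt_def)
  have grid_h: "h 0 (pt c t) \<noteq> 0" for t
  proof -
    let ?H = "hessian (V L lam mu 0) ?n (pt c t)"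
    have Hc: "?H \<in> carrier_mat ?n ?n" unfolding hessian_def by simp
    have Hi: "i < ?n \<Longrightarrow> j < ?n \<Longrightarrow> ?H $$ (i,j) = (if i = j then lam/2 * pt c t j ^ 2 - mu^2 else 0)" for i j
      unfolding hessian_def by (simp add: hess0)
    have "upper_triangular ?H" unfolding upper_triangular_def using Hc Hi by auto
    hence "det ?H = prod_list (diag_mat ?H)" by (rule det_upper_triangular[OF _ Hc])
    also have "\<dots> \<noteq> 0"
      using Hi Hc rt_hess unfolding diag_mat_def by (auto simp: pt_def prod_list_zero_iff)
    finally show ?thesis unfolding h_def .
  qed
  have "poly (det PM) 0 \<noteq> 0"
  proof
    assume "poly (det PM) 0 = 0"
    hence "det (transpose_mat (Mx 0)) = 0" using det_transpose[OF Mx_carr] detMx by simp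
    then obtain u where u: "u \<in> carrier_vec ?N" "u \<noteq> 0\<^sub>v ?N" "transpose_mat (Mx 0) *\<^sub>v u = 0\<^sub>v ?N"
      using det_0_iff_vec_prod_zero[of "transpose_mat (Mx 0)" ?N] Mx_carr by auto
    have col: "(\<Sum>k<?N. poly (r k l) 0 * u $ k) = 0" if l: "l < ?N" for l
    proof -
      have "(transpose_mat (Mx 0) *\<^sub>v u) $ l = 0" using u(3) l by simp
      thus ?thesis using l Mx_carr[of 0] u(1)
        by (simp add: scalar_prod_def Mx_idx lessThan_atLeast0 mult.commute)
    qed
    have Z: "(\<Sum>k<?N. u $ k * mon ?n k (pt c t)) = 0" for t
    proof -
      have "h 0 (pt c t) * (\<Sum>k<?N. u $ k * mon ?n k (pt c t))
          = (\<Sum>k<?N. u $ k * (h 0 (pt c t) * mon ?n k (pt c t)))"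
        by (simp add: sum_distrib_left algebra_simps)
      also have "\<dots> = (\<Sum>k<?N. u $ k * (\<Sum>l<?N. poly (r k l) 0 * mon ?n l (pt c t)))"
        using r[OF grid_crit] by simp
      also have "\<dots> = (\<Sum>k<?N. \<Sum>l<?N. u $ k * (poly (r k l) 0 * mon ?n l (pt c t)))"
        by (simp add: sum_distrib_left)
      also have "\<dots> = (\<Sum>l<?N. \<Sum>k<?N. u $ k * (poly (r k l) 0 * mon ?n l (pt c t)))"
        by (rule sum.swap)
      also have "\<dots> = (\<Sum>l<?N. (\<Sum>k<?N. poly (r k l) 0 * u $ k) * mon ?n l (pt c t))"
        by (intro sum.cong refl) (simp only: sum_distrib_right, intro sum.cong refl, simp add: mult_ac)
      also have "\<dots> = 0" using col by simp
      finally show ?thesis using grid_h[of t] by simp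
    qed
    have "u = 0\<^sub>v ?N"
    proof (rule eq_vecI)
      fix k assume "k < dim_vec (0\<^sub>v ?N :: complex vec)"
      hence k: "k < ?N" by simp
      define U where "U e = u $ (inv_into {0..<?N} (enc ?n) e)" for e
      have bij: "bij_betw (enc ?n) {0..<?N} (Eset ?n)" by (rule enc_bij)
      have inv: "inv_into {0..<?N} (enc ?n) (enc ?n k') = k'" if "k' < ?N" for k'
        using bij that by (simp add: bij_betw_def inv_into_f_f)
      have reidx: "(\<Sum>e\<in>Eset ?n. U e * monb ?n e p) = (\<Sum>k'<?N. u $ k' * mon ?n k' p)" for p
      proof -
        have "(\<Sum>e\<in>Eset ?n. U e * monb ?n e p) = (\<Sum>k'\<in>{0..<?N}. U (enc ?n k') * monb ?n (enc ?n k') p)"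
          by (rule sum.reindex_bij_betw[OF bij, symmetric])
        also have "\<dots> = (\<Sum>k'<?N. u $ k' * mon ?n k' p)"
          unfolding lessThan_atLeast0 by (intro sum.cong refl) (simp add: U_def inv mon_def)
        finally show ?thesis .
      qed
      have "enc ?n k \<in> Eset ?n" using bij k unfolding bij_betw_def by auto
      hence "U (enc ?n k) = 0"
        by (rule dual_zero[OF cnz]) (use Z reidx in simp)
      thus "u $ k = 0\<^sub>v ?N $ k" using inv[OF k] k by (simp add: U_def)
    qed (use u(1) in simp)
    with u(2) show False by simp
  qed
  hence "det PM \<noteq> 0" by auto
  hence "finite {J. poly (det PM) J = 0}" by (rule poly_roots_finite)
  thus ?thesis using sub by (rule finite_subset[rotated])
qed

end
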